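(* Let $p$ be a privacy parameter, let the input domain be $\{D_1,\dots,D_{2^k}\}$ (bit strings of length $k$), and let $\mathcal{M}$ be an algorithm every row of whose matrix representation belongs to the row cone of $\{\mathrm{RR}_p\}$. Suppose the attacker believes the bits of the data $\mathbf{Data}$ are independent and bit $i$ equals $1$ with probability $q_i$. Then for any subset $J=\{\ell_1,\dots,\ell_m\}$ of bit positions such that $q_{\ell_j}\geq p$ or $q_{\ell_j}\leq 1-p$ for every $j=1,\dots,m$: if $P(\mathrm{parity}(J)=0)\geq P(\mathrm{parity}(J)=1)$ then $P(\mathrm{parity}(J)=0\mid\mathcal{M}(\mathbf{Data}))\geq P(\mathrm{parity}(J)=1\mid\mathcal{M}(\mathbf{Data}))$, and if $P(\mathrm{parity}(J)=1)\geq P(\mathrm{parity}(J)=0)$ then $P(\mathrm{parity}(J)=1\mid\mathcal{M}(\mathbf{Data}))\geq P(\mathrm{parity}(J)=0\mid\mathcal{M}(\mathbf{Data}))$. Furthermore, an algorithm $\mathcal{M}$ can provide these guarantees only if every row of its matrix representation belongs to the row cone of $\{\mathrm{RR}_p\}$.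
   Context: $\mathrm{RR}_p$ (randomized response) is the algorithm that, on input a bit string of length $k$, independently flips each bit with probability $1-p$. The matrix representation of an algorithm $\mathcal{M}$ has columns indexed by input datasets, rows indexed by outputs $\omega$, and $(\omega,D)$ entry $P(\mathcal{M}(D)=\omega)$. A privacy definition is a set of algorithms with a common input domain; its consistent normal form is the smallest set containing it closed under post-processing (composition $\mathcal{A}\circ\mathcal{M}$ with any algorithm $\mathcal{A}$ with independent randomness whose domain contains the range of $\mathcal{M}$) and convex combinations (running one member with probability $p$, another with probability $1-p$). The row cone of a privacy definition is the set of vectors $\big(c\,P[\mathcal{M}(D_1)=\omega],\,c\,P[\mathcal{M}(D_2)=\omega],\dots\big)$ with $c\ge0$, $\mathcal{M}$ in its consistent normal form, $\omega$ in the range of $\mathcal{M}$. $\mathrm{parity}(J)$ is the parity (sum mod 2) of the bits of the data in positions $J$. *)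

theory Defs
  imports "HOL-Probability.Probability"
begin

definition dom_k :: "nat \<Rightarrow> bool list set" where
  "dom_k k = {xs. length xs = k}"

fun RR :: "real \<Rightarrow> bool list \<Rightarrow> bool list pmf" where
  "RR p [] = return_pmf []"
| "RR p (x # xs) = bind_pmf (bernoulli_pmf p)
     (\<lambda>b. map_pmf (\<lambda>ys. (if b then x else \<not> x) # ys) (RR p xs))"

text \<open>Consistent normal form of {RR_p}: smallest set of (discrete) algorithms containing RR_p
  (with outputs relabelled injectively into the countable output space nat) closed under
  post-processing and convex combinations.\<close>
inductive_set cnf :: "real \<Rightarrow> (bool list \<Rightarrow> nat pmf) set" for p :: real where
  base: "inj f \<Longrightarrow> (\<lambda>D. map_pmf f (RR p D)) \<in> cnf p"
| post: "M \<in> cnf p \<Longrightarrow> (\<lambda>D. bind_pmf (M D) A) \<in> cnf p"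
| mix: "M1 \<in> cnf p \<Longrightarrow> M2 \<in> cnf p \<Longrightarrow> 0 \<le> a \<Longrightarrow> a \<le> 1 \<Longrightarrow>
        (\<lambda>D. bind_pmf (bernoulli_pmf a) (\<lambda>b. if b then M1 D else M2 D)) \<in> cnf p"

definition row_cone :: "real \<Rightarrow> nat \<Rightarrow> (bool list \<Rightarrow> real) set" where
  "row_cone p k = {v. \<exists>c\<ge>0. \<exists>M\<in>cnf p. \<exists>\<omega>.
      (\<exists>D\<in>dom_k k. \<omega> \<in> set_pmf (M D)) \<and> (\<forall>D\<in>dom_k k. v D = c * pmf (M D) \<omega>)}"

fun ibits :: "(nat \<Rightarrow> real) \<Rightarrow> nat \<Rightarrow> bool list pmf" where
  "ibits q 0 = return_pmf []"
| "ibits q (Suc n) = bind_pmf (ibits q n) (\<lambda>xs. map_pmf (\<lambda>b. xs @ [b]) (bernoulli_pmf (q n)))"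

definition parity :: "nat set \<Rightarrow> bool list \<Rightarrow> nat" where
  "parity J xs = card {i\<in>J. i < length xs \<and> xs ! i} mod 2"

definition joint :: "(nat \<Rightarrow> real) \<Rightarrow> nat \<Rightarrow> (bool list \<Rightarrow> 'b pmf) \<Rightarrow> (bool list \<times> 'b) pmf" where
  "joint q k M = bind_pmf (ibits q k) (\<lambda>D. map_pmf (\<lambda>\<omega>. (D, \<omega>)) (M D))"

definition prior_par :: "(nat \<Rightarrow> real) \<Rightarrow> nat \<Rightarrow> nat set \<Rightarrow> nat \<Rightarrow> real" where
  "prior_par q k J b = measure_pmf.prob (ibits q k) {xs. parity J xs = b}"

definition post_par :: "(nat \<Rightarrow> real) \<Rightarrow> nat \<Rightarrow> (bool list \<Rightarrow> 'b pmf) \<Rightarrow> nat set \<Rightarrow> nat \<Rightarrow> 'b \<Rightarrow> real" where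
  "post_par q k M J b \<omega> =
     measure_pmf.prob (cond_pmf (joint q k M) {z. snd z = \<omega>}) {z. parity J (fst z) = b}"

definition parity_guarantee :: "real \<Rightarrow> nat \<Rightarrow> (bool list \<Rightarrow> 'b pmf) \<Rightarrow> bool" where
  "parity_guarantee p k M \<longleftrightarrow>
    (\<forall>q. (\<forall>i<k. 0 \<le> q i \<and> q i \<le> 1) \<longrightarrow>
      (\<forall>J. J \<subseteq> {..<k} \<longrightarrow> (\<forall>j\<in>J. q j \<ge> p \<or> q j \<le> 1 - p) \<longrightarrow>
        (\<forall>\<omega> \<in> set_pmf (map_pmf snd (joint q k M)).
          (prior_par q k J 0 \<ge> prior_par q k J 1 \<longrightarrow> post_par q k M J 0 \<omega> \<ge> post_par q k M J 1 \<omega>) \<and>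
          (prior_par q k J 1 \<ge> prior_par q k J 0 \<longrightarrow> post_par q k M J 1 \<omega> \<ge> post_par q k M J 0 \<omega>))))"

end

theory Submission
  imports Defs "HOL-Library.Countable"
begin

lemma finite_dom_k: "finite (dom_k k)"
  unfolding dom_k_def using finite_lists_length_eq[of "UNIV::bool set" k] by simp

lemma dom_k_0: "dom_k 0 = {[]}" by (auto simp: dom_k_def)

lemma dom_k_Suc: "dom_k (Suc k) = (\<lambda>(xs,b). xs @ [b]) ` (dom_k k \<times> UNIV)"
proof
  show "dom_k (Suc k) \<subseteq> (\<lambda>(xs,b). xs @ [b]) ` (dom_k k \<times> UNIV)"
  proof
    fix D assume "D \<in> dom_k (Suc k)"
    then have "length D = Suc k" by (simp add: dom_k_def)
    then have "D = butlast D @ [last D]" "butlast D \<in> dom_k k"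
      by (auto simp: dom_k_def intro!: append_butlast_last_id[symmetric])
    then show "D \<in> (\<lambda>(xs,b). xs @ [b]) ` (dom_k k \<times> UNIV)" by (metis (no_types, lifting) UNIV_I case_prod_conv image_eqI mem_Sigma_iff)
  qed
qed (auto simp: dom_k_def)

lemma sum_prod_dom:
  fixes f :: "nat \<Rightarrow> bool \<Rightarrow> real"
  shows "(\<Sum>D\<in>dom_k k. \<Prod>i<k. f i (D!i)) = (\<Prod>i<k. f i True + f i False)"
proof (induction k)
  case 0 then show ?case by (simp add: dom_k_0)
next
  case (Suc k)
  have inj: "inj_on (\<lambda>(xs,b). xs @ [b]) (dom_k k \<times> (UNIV::bool set))" by (auto simp: inj_on_def)
  have "(\<Sum>D\<in>dom_k (Suc k). \<Prod>i<Suc k. f i (D!i)) = (\<Sum>z\<in>dom_k k \<times> UNIV. \<Prod>i<Suc k. f i ((fst z @ [snd z])!i))"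
    unfolding dom_k_Suc by (subst sum.reindex[OF inj]) (simp add: case_prod_beta)
  also have "\<dots> = (\<Sum>z\<in>dom_k k \<times> UNIV. (\<Prod>i<k. f i (fst z!i)) * f k (snd z))"
  proof (rule sum.cong[OF refl])
    fix z assume "z \<in> dom_k k \<times> (UNIV::bool set)"
    then have l: "length (fst z) = k" by (auto simp: dom_k_def)
    have "(\<Prod>i<k. f i ((fst z @ [snd z])!i)) = (\<Prod>i<k. f i (fst z!i))"
      by (rule prod.cong) (auto simp: nth_append l)
    then show "(\<Prod>i<Suc k. f i ((fst z @ [snd z])!i)) = (\<Prod>i<k. f i (fst z!i)) * f k (snd z)"
      by (simp add: l nth_append)
  qed
  also have "\<dots> = (\<Sum>xs\<in>dom_k k. \<Sum>b\<in>UNIV. (\<Prod>i<k. f i (xs!i)) * f k b)"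
    by (simp add: sum.cartesian_product case_prod_beta)
  also have "\<dots> = (\<Sum>xs\<in>dom_k k. (\<Prod>i<k. f i (xs!i))) * (f k True + f k False)"
    by (simp add: UNIV_bool sum_distrib_left sum_distrib_right algebra_simps sum.distrib)
  finally show ?case using Suc by simp
qed

definition rr :: "real \<Rightarrow> bool \<Rightarrow> bool \<Rightarrow> real" where "rr p a t = (if a = t then p else 1 - p)"
definition ww :: "real \<Rightarrow> bool \<Rightarrow> bool \<Rightarrow> real" where "ww p a t = (if a = t then p else p - 1)"
definition Rm :: "real \<Rightarrow> bool list \<Rightarrow> bool list \<Rightarrow> real" where
  "Rm p D \<tau> = (\<Prod>i<length D. rr p (D!i) (\<tau>!i))"
definition Wm :: "real \<Rightarrow> bool list \<Rightarrow> bool list \<Rightarrow> real" where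
  "Wm p D \<tau> = (\<Prod>i<length D. ww p (D!i) (\<tau>!i))"
definition pri :: "(nat \<Rightarrow> real) \<Rightarrow> bool list \<Rightarrow> real" where
  "pri q D = (\<Prod>i<length D. if D!i then q i else 1 - q i)"

lemma pmf_map_Cons: "pmf (map_pmf (Cons c) X) (t#ts) = (if c = t then pmf X ts else 0)"
proof (cases "c = t")
  case True then show ?thesis using pmf_map_inj'[of "Cons c" X ts] by (simp add: inj_def)
next
  case False then show ?thesis by (intro trans[OF pmf_map_outside]) auto
qed

lemma pmf_map_Cons_Nil: "pmf (map_pmf (Cons c) X) [] = 0"
  by (intro pmf_map_outside) auto

lemma pmf_RR: "0 \<le> p \<Longrightarrow> p \<le> 1 \<Longrightarrow> pmf (RR p D) \<tau> = (if length \<tau> = length D then Rm p D \<tau> else 0)"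
proof (induction D arbitrary: \<tau>)
  case Nil then show ?case by (cases \<tau>) (auto simp: Rm_def)
next
  case (Cons x xs)
  have e: "pmf (RR p (x#xs)) \<tau> = pmf (map_pmf (Cons x) (RR p xs)) \<tau> * p + pmf (map_pmf (Cons (\<not>x)) (RR p xs)) \<tau> * (1-p)"
    using Cons.prems by (simp add: pmf_bind)
  show ?case
  proof (cases \<tau>)
    case Nil then show ?thesis using e by (simp add: pmf_map_Cons_Nil)
  next
    case (Cons t ts)
    have R: "Rm p (x#xs) (t#ts) = rr p x t * Rm p xs ts"
      unfolding Rm_def length_Cons prod.lessThan_Suc_shift by simp
    show ?thesis using e Cons.IH[OF Cons.prems] unfolding Cons
      by (auto simp: pmf_map_Cons R rr_def)
  qed
qed

lemma rr_sym: "rr p a t = rr p t a" by (auto simp: rr_def)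
lemma ww_sym: "ww p a t = ww p t a" by (auto simp: ww_def)

lemma Rm_sym: "length D = length \<tau> \<Longrightarrow> Rm p D \<tau> = Rm p \<tau> D"
  unfolding Rm_def by (simp add: rr_sym)
lemma Wm_sym: "length D = length \<tau> \<Longrightarrow> Wm p D \<tau> = Wm p \<tau> D"
  unfolding Wm_def by (simp add: ww_sym)

lemma ortho:
  assumes "D \<in> dom_k k" "D' \<in> dom_k k"
  shows "(\<Sum>\<tau>\<in>dom_k k. Rm p D \<tau> * Wm p D' \<tau>) = (if D = D' then (2*p-1)^k else 0)"
proof -
  have l: "length D = k" "length D' = k" using assms by (auto simp: dom_k_def)
  have "(\<Sum>\<tau>\<in>dom_k k. Rm p D \<tau> * Wm p D' \<tau>) = (\<Sum>\<tau>\<in>dom_k k. \<Prod>i<k. rr p (D!i) (\<tau>!i) * ww p (D'!i) (\<tau>!i))"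
    unfolding Rm_def Wm_def l by (simp add: prod.distrib)
  also have "\<dots> = (\<Prod>i<k. rr p (D!i) True * ww p (D'!i) True + rr p (D!i) False * ww p (D'!i) False)"
    by (rule sum_prod_dom)
  also have "\<dots> = (\<Prod>i<k. if D!i = D'!i then 2*p-1 else 0)"
    by (rule prod.cong) (auto simp: rr_def ww_def algebra_simps)
  also have "\<dots> = (if D = D' then (2*p-1)^k else 0)"
  proof (cases "D = D'")
    case True then show ?thesis by simp
  next
    case False
    then obtain i where "i < k" "D!i \<noteq> D'!i" using l False nth_equalityI[of D D'] by auto
    then show ?thesis using False by (intro trans[OF prod_zero]) auto
  qed
  finally show ?thesis .
qed

lemma pmf_map_snoc: "pmf (map_pmf (\<lambda>b. xs @ [b]) X) D = (if D \<noteq> [] \<and> butlast D = xs then pmf X (last D) else 0)"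
proof (cases "D \<noteq> [] \<and> butlast D = xs")
  case True
  then have D: "D = xs @ [last D]" by (metis append_butlast_last_id)
  have "pmf (map_pmf (\<lambda>b. xs @ [b]) X) (xs @ [last D]) = pmf X (last D)"
    by (rule pmf_map_inj') (auto simp: inj_def)
  then show ?thesis using True D by metis
next
  case False then show ?thesis by (intro trans[OF pmf_map_outside]) auto
qed

lemma pmf_ibits:
  assumes "\<forall>i<k. 0 \<le> q i \<and> q i \<le> 1"
  shows "pmf (ibits q k) D = (if length D = k then pri q D else 0)"
  using assms
proof (induction k arbitrary: D)
  case 0 then show ?case by (cases D) (auto simp: pri_def)
next
  case (Suc n)
  have q: "0 \<le> q n" "q n \<le> 1" using Suc.prems by auto
  have "pmf (ibits q (Suc n)) D = (\<integral>xs. pmf (map_pmf (\<lambda>b. xs @ [b]) (bernoulli_pmf (q n))) D \<partial>ibits q n)"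
    by (simp add: pmf_bind)
  also have "\<dots> = (\<integral>xs. (if D \<noteq> [] \<and> butlast D = xs then pmf (bernoulli_pmf (q n)) (last D) else 0) \<partial>ibits q n)"
    by (simp add: pmf_map_snoc)
  also have "\<dots> = (if D \<noteq> [] then pmf (bernoulli_pmf (q n)) (last D) * pmf (ibits q n) (butlast D) else 0)"
    by (subst integral_measure_pmf_real[of "{butlast D}"]) (auto split: if_splits)
  also have "\<dots> = (if length D = Suc n then pri q D else 0)"
  proof (cases "length D = Suc n")
    case True
    then have D: "D = butlast D @ [last D]" "D \<noteq> []" "length (butlast D) = n"
      by (auto intro!: append_butlast_last_id[symmetric])
    have "pri q D = pri q (butlast D) * (if last D then q n else 1 - q n)"
      unfolding pri_def using True D(3)
      apply (subst (1 2) D(1))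
      apply (simp add: nth_append)
      done
    then show ?thesis using D q Suc.IH[of "butlast D"] Suc.prems by (cases "last D") (auto simp: True)
  next
    case False
    then show ?thesis using Suc.IH[of "butlast D"] Suc.prems by auto
  qed
  finally show ?case .
qed

lemma meas_fin:
  assumes "finite A" "set_pmf P \<subseteq> A"
  shows "measure_pmf.prob P B = (\<Sum>x\<in>{x\<in>A. x \<in> B}. pmf P x)"
proof -
  have "measure_pmf.prob P B = measure_pmf.prob P (B \<inter> set_pmf P)"
    by (simp add: measure_Int_set_pmf)
  also have "B \<inter> set_pmf P = {x\<in>A. x \<in> B} \<inter> set_pmf P" using assms by auto
  also have "measure_pmf.prob P \<dots> = measure_pmf.prob P {x\<in>A. x \<in> B}"
    by (simp add: measure_Int_set_pmf)
  also have "\<dots> = (\<Sum>x\<in>{x\<in>A. x \<in> B}. pmf P x)"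
    using assms by (intro measure_measure_pmf_finite) auto
  finally show ?thesis .
qed

lemma set_ibits:
  assumes "\<forall>i<k. 0 \<le> q i \<and> q i \<le> 1"
  shows "set_pmf (ibits q k) \<subseteq> dom_k k"
  using pmf_ibits[OF assms] by (auto simp: set_pmf_iff dom_k_def split: if_splits)

lemma prior_par_eq:
  assumes "\<forall>i<k. 0 \<le> q i \<and> q i \<le> 1"
  shows "prior_par q k J b = (\<Sum>D\<in>{D\<in>dom_k k. parity J D = b}. pri q D)"
  unfolding prior_par_def
  apply (subst meas_fin[OF finite_dom_k set_ibits[OF assms]])
  apply (rule sum.cong)
   apply simp
  apply (simp add: pmf_ibits[OF assms] dom_k_def)
  done

lemma pmf_joint:
  "pmf (joint q k M) (D, \<omega>) = pmf (ibits q k) D * pmf (M D) \<omega>"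
proof -
  have m: "pmf (map_pmf (Pair D') (M D')) (D, \<omega>) = (if D' = D then pmf (M D) \<omega> else 0)" for D'
  proof (cases "D' = D")
    case True then show ?thesis using pmf_map_inj'[of "Pair D" "M D" \<omega>] by (simp add: inj_def)
  next
    case False then show ?thesis by (intro trans[OF pmf_map_outside]) auto
  qed
  have "pmf (joint q k M) (D, \<omega>) = (\<integral>D'. (if D' = D then pmf (M D) \<omega> else 0) \<partial>ibits q k)"
    unfolding joint_def pmf_bind by (simp add: m)
  also have "\<dots> = pmf (ibits q k) D * pmf (M D) \<omega>"
    by (subst integral_measure_pmf_real[of "{D}"]) (auto split: if_splits)
  finally show ?thesis .
qed

lemma set_joint: "set_pmf (joint q k M) = {z. fst z \<in> set_pmf (ibits q k) \<and> snd z \<in> set_pmf (M (fst z))}"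
  unfolding joint_def by auto

lemma post_par_eq:
  assumes q: "\<forall>i<k. 0 \<le> q i \<and> q i \<le> 1"
    and w: "\<omega> \<in> set_pmf (map_pmf snd (joint q k M))"
  shows "post_par q k M J b \<omega> =
    (\<Sum>D\<in>{D\<in>dom_k k. parity J D = b}. pri q D * pmf (M D) \<omega>) / measure_pmf.prob (joint q k M) {z. snd z = \<omega>}"
proof -
  let ?A = "{z. snd z = \<omega>}"
  let ?d = "measure_pmf.prob (joint q k M) ?A"
  have ne: "set_pmf (joint q k M) \<inter> ?A \<noteq> {}" using w by auto
  have sub: "set_pmf (cond_pmf (joint q k M) ?A) \<subseteq> dom_k k \<times> {\<omega>}"
    using set_ibits[OF q] ne by (auto simp: set_cond_pmf[OF ne] set_joint)
  have "post_par q k M J b \<omega> = (\<Sum>z\<in>{z\<in>dom_k k \<times> {\<omega>}. parity J (fst z) = b}. pmf (cond_pmf (joint q k M) ?A) z)"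
    unfolding post_par_def
    by (subst meas_fin[OF _ sub]) (auto simp: finite_dom_k)
  also have "\<dots> = (\<Sum>z\<in>{z\<in>dom_k k \<times> {\<omega>}. parity J (fst z) = b}. pmf (joint q k M) z / ?d)"
    by (rule sum.cong) (auto simp: pmf_cond[OF ne])
  also have "{z\<in>dom_k k \<times> {\<omega>}. parity J (fst z) = b} = (\<lambda>D. (D, \<omega>)) ` {D\<in>dom_k k. parity J D = b}"
    by auto
  also have "(\<Sum>z\<in>\<dots>. pmf (joint q k M) z / ?d) = (\<Sum>D\<in>{D\<in>dom_k k. parity J D = b}. pmf (joint q k M) (D, \<omega>) / ?d)"
    by (subst sum.reindex) (auto simp: inj_on_def)
  also have "\<dots> = (\<Sum>D\<in>{D\<in>dom_k k. parity J D = b}. pri q D * pmf (M D) \<omega>) / ?d"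
    by (simp add: sum_divide_distrib pmf_joint pmf_ibits[OF q] dom_k_def)
  finally show ?thesis .
qed

lemma parity_lt2: "parity J D < 2" by (simp add: parity_def)

lemma chi_prod:
  assumes "length D = k"
  shows "(-1::real)^(parity J D) = (\<Prod>i<k. if i\<in>J \<and> D!i then -1 else 1)"
proof -
  let ?S = "{i\<in>J. i < length D \<and> D!i}"
  have "(\<Prod>i<k. if i\<in>J \<and> D!i then -1 else (1::real)) = (\<Prod>i\<in>{..<k} \<inter> {i. i\<in>J \<and> D!i}. -1) * (\<Prod>i\<in>{..<k} \<inter> -{i. i\<in>J \<and> D!i}. 1)"
    by (rule prod.If_cases) simp
  also have "{..<k} \<inter> {i. i\<in>J \<and> D!i} = ?S" using assms by auto
  finally have "(\<Prod>i<k. if i\<in>J \<and> D!i then -1 else (1::real)) = (-1)^card ?S" by simp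
  moreover have "(-1::real)^(card ?S mod 2) = (-1)^card ?S"
    by (simp add: minus_one_power_iff)
  ultimately show ?thesis by (simp add: parity_def)
qed

lemma diff_sum:
  assumes "finite A"
  shows "(\<Sum>D\<in>{D\<in>A. parity J D = 0}. f D) - (\<Sum>D\<in>{D\<in>A. parity J D = 1}. f D)
       = (\<Sum>D\<in>A. f D * (-1::real)^(parity J D))"
proof -
  have "(\<Sum>D\<in>A. f D * (-1::real)^(parity J D)) = (\<Sum>D\<in>A. if parity J D = 0 then f D else - f D)"
  proof (rule sum.cong[OF refl])
    fix D assume "D \<in> A"
    have "parity J D = 0 \<or> parity J D = 1" using parity_lt2[of J D] by arith
    then show "f D * (-1::real)^(parity J D) = (if parity J D = 0 then f D else - f D)" by auto
  qed
  also have "\<dots> = (\<Sum>D\<in>A \<inter> {D. parity J D = 0}. f D) + (\<Sum>D\<in>A \<inter> - {D. parity J D = 0}. - f D)"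
    by (rule sum.If_cases) (rule assms)
  also have "A \<inter> - {D. parity J D = 0} = {D\<in>A. parity J D = 1}"
  proof -
    have e: "(parity J D \<noteq> 0) = (parity J D = 1)" for D using parity_lt2[of J D] by arith
    show ?thesis using e by blast
  qed
  also have "A \<inter> {D. parity J D = 0} = {D\<in>A. parity J D = 0}" by auto
  finally show ?thesis by (simp add: sum_negf)
qed

lemma sum_pri_chi:
  fixes h :: "nat \<Rightarrow> bool \<Rightarrow> real"
  shows "(\<Sum>D\<in>dom_k k. pri q D * (\<Prod>i<k. h i (D!i)) * (-1)^(parity J D)) =
     (\<Prod>i<k. q i * h i True * (if i \<in> J then -1 else 1) + (1 - q i) * h i False)"
proof -
  have "(\<Sum>D\<in>dom_k k. pri q D * (\<Prod>i<k. h i (D!i)) * (-1)^(parity J D)) =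
    (\<Sum>D\<in>dom_k k. \<Prod>i<k. (if D!i then q i else 1 - q i) * h i (D!i) * (if i\<in>J \<and> D!i then -1 else 1))"
  proof (rule sum.cong[OF refl])
    fix D assume "D \<in> dom_k k"
    then have l: "length D = k" by (simp add: dom_k_def)
    show "pri q D * (\<Prod>i<k. h i (D!i)) * (-1)^(parity J D) =
      (\<Prod>i<k. (if D!i then q i else 1 - q i) * h i (D!i) * (if i\<in>J \<and> D!i then -1 else 1))"
      unfolding chi_prod[OF l] pri_def l by (simp add: prod.distrib)
  qed
  also have "\<dots> = (\<Prod>i<k. q i * h i True * (if i \<in> J then -1 else 1) + (1 - q i) * h i False)"
    by (subst sum_prod_dom) (rule prod.cong, auto)
  finally show ?thesis .
qed

lemma sign_prod:
  fixes e f :: "nat \<Rightarrow> real"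
  assumes "\<forall>i<k. e i \<noteq> 0 \<and> 0 \<le> e i * f i"
  shows "(0 \<le> (\<Prod>i<k. e i) \<longrightarrow> 0 \<le> (\<Prod>i<k. f i)) \<and> ((\<Prod>i<k. e i) \<le> 0 \<longrightarrow> (\<Prod>i<k. f i) \<le> 0)"
proof -
  have "0 \<le> (\<Prod>i<k. e i * f i)" using assms by (intro prod_nonneg) auto
  then have a: "0 \<le> (\<Prod>i<k. e i) * (\<Prod>i<k. f i)" by (simp add: prod.distrib)
  have b: "(\<Prod>i<k. e i) \<noteq> 0" using assms by auto
  show ?thesis
  proof (intro conjI impI)
    assume "0 \<le> (\<Prod>i<k. e i)"
    then have "0 < (\<Prod>i<k. e i)" using b by linarith
    then show "0 \<le> (\<Prod>i<k. f i)" using a by (simp add: zero_le_mult_iff)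
  next
    assume "(\<Prod>i<k. e i) \<le> 0"
    then have "(\<Prod>i<k. e i) < 0" using b by linarith
    then show "(\<Prod>i<k. f i) \<le> 0" using a by (simp add: zero_le_mult_iff)
  qed
qed

lemma inversion:
  assumes "D \<in> dom_k k"
  shows "(\<Sum>\<tau>\<in>dom_k k. (\<Sum>D'\<in>dom_k k. x D' * Wm p D' \<tau>) * Rm p D \<tau>) = (2*p-1)^k * x D"
proof -
  have "(\<Sum>\<tau>\<in>dom_k k. (\<Sum>D'\<in>dom_k k. x D' * Wm p D' \<tau>) * Rm p D \<tau>)
      = (\<Sum>D'\<in>dom_k k. x D' * (\<Sum>\<tau>\<in>dom_k k. Rm p D \<tau> * Wm p D' \<tau>))"
    apply (simp add: sum_distrib_left sum_distrib_right)
    apply (subst sum.swap)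
    apply (rule sum.cong[OF refl])+
    apply (simp add: algebra_simps)
    done
  also have "\<dots> = (\<Sum>D'\<in>dom_k k. x D' * (if D = D' then (2*p-1)^k else 0))"
    by (rule sum.cong[OF refl]) (simp add: ortho[OF assms])
  also have "\<dots> = (2*p-1)^k * x D" using assms by (simp add: finite_dom_k if_distrib cong: if_cong)
  finally show ?thesis .
qed

lemma int_pmf_count:
  fixes g :: "'a \<Rightarrow> real"
  shows "(\<integral>u. g u \<partial>measure_pmf P) = (\<integral>u. pmf P u * g u \<partial>count_space UNIV)"
  by (subst measure_pmf_eq_density) (simp add: integral_density)

lemma integrable_pmf_mult:
  fixes g :: "'a \<Rightarrow> real"
  assumes "\<And>u. 0 \<le> g u \<and> g u \<le> 1"
  shows "integrable (count_space UNIV) (\<lambda>u. pmf P u * g u)"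
proof (rule Bochner_Integration.integrable_bound[OF integrable_pmf])
  show "(\<lambda>u. pmf P u * g u) \<in> borel_measurable (count_space UNIV)" by simp
  show "AE x in count_space UNIV. norm (pmf P x * g x) \<le> norm (pmf P x)"
  proof (intro AE_I2)
    fix x
    have "0 \<le> pmf P x" "0 \<le> g x" "g x \<le> 1" using assms[of x] pmf_nonneg by auto
    then show "norm (pmf P x * g x) \<le> norm (pmf P x)" by (simp add: abs_mult mult_left_le)
  qed
qed

lemma cnf_inv:
  assumes "M \<in> cnf p" "1/2 < p" "p < 1" "\<tau> \<in> dom_k k"
  shows "0 \<le> (\<Sum>D\<in>dom_k k. pmf (M D) \<omega> * Wm p D \<tau>)"
  using assms(1)
proof (induction arbitrary: \<omega> rule: cnf.induct)
  case (base f)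
  have p: "0 \<le> p" "p \<le> 1" using assms by auto
  show ?case
  proof (cases "\<omega> \<in> range f")
    case True
    then obtain \<sigma> where w: "\<omega> = f \<sigma>" by auto
    have e: "pmf (map_pmf f (RR p D)) \<omega> = (if length \<sigma> = length D then Rm p D \<sigma> else 0)" for D
      unfolding w pmf_map_inj'[OF base] pmf_RR[OF p] ..
    show ?thesis
    proof (cases "\<sigma> \<in> dom_k k")
      case True
      have "(\<Sum>D\<in>dom_k k. pmf (map_pmf f (RR p D)) \<omega> * Wm p D \<tau>) = (\<Sum>D\<in>dom_k k. Rm p \<sigma> D * Wm p \<tau> D)"
        using True assms(4) by (intro sum.cong) (auto simp: e dom_k_def Rm_sym Wm_sym)
      also have "\<dots> = (if \<sigma> = \<tau> then (2*p-1)^k else 0)" by (rule ortho[OF True assms(4)])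
      finally show ?thesis using assms by simp
    next
      case False
      then have "pmf (map_pmf f (RR p D)) \<omega> = 0" if "D \<in> dom_k k" for D
        using that by (auto simp: e dom_k_def)
      then show ?thesis by simp
    qed
  next
    case False
    then have "pmf (map_pmf f (RR p D)) \<omega> = 0" for D by (intro pmf_map_outside) auto
    then show ?thesis by simp
  qed
next
  case (post M A)
  let ?g = "\<lambda>u. pmf (A u) \<omega>"
  have g: "0 \<le> ?g u \<and> ?g u \<le> 1" for u by (simp add: pmf_nonneg pmf_le_1)
  have "(\<Sum>D\<in>dom_k k. pmf (bind_pmf (M D) A) \<omega> * Wm p D \<tau>)
      = (\<Sum>D\<in>dom_k k. (\<integral>u. pmf (M D) u * ?g u * Wm p D \<tau> \<partial>count_space UNIV))"
    by (simp add: pmf_bind int_pmf_count)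
  also have "\<dots> = (\<integral>u. (\<Sum>D\<in>dom_k k. pmf (M D) u * ?g u * Wm p D \<tau>) \<partial>count_space UNIV)"
    by (rule Bochner_Integration.integral_sum[symmetric]) (intro integrable_mult_left integrable_pmf_mult g)
  also have "\<dots> = (\<integral>u. ?g u * (\<Sum>D\<in>dom_k k. pmf (M D) u * Wm p D \<tau>) \<partial>count_space UNIV)"
    by (simp add: sum_distrib_left algebra_simps)
  also have "0 \<le> \<dots>" using post.IH g by (intro Bochner_Integration.integral_nonneg mult_nonneg_nonneg) auto
  finally show ?case by simp
next
  case (mix M1 M2 a)
  have "(\<Sum>D\<in>dom_k k. pmf (bind_pmf (bernoulli_pmf a) (\<lambda>b. if b then M1 D else M2 D)) \<omega> * Wm p D \<tau>)
     = a * (\<Sum>D\<in>dom_k k. pmf (M1 D) \<omega> * Wm p D \<tau>) + (1 - a) * (\<Sum>D\<in>dom_k k. pmf (M2 D) \<omega> * Wm p D \<tau>)"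
  proof -
    have "pmf (bind_pmf (bernoulli_pmf a) (\<lambda>b. if b then M1 D else M2 D)) \<omega> * Wm p D \<tau>
       = a * (pmf (M1 D) \<omega> * Wm p D \<tau>) + (1 - a) * (pmf (M2 D) \<omega> * Wm p D \<tau>)" for D
      using mix.hyps by (simp add: pmf_bind algebra_simps)
    then show ?thesis by (simp add: sum.distrib sum_distrib_left)
  qed
  also have "0 \<le> \<dots>" using mix.IH mix.hyps by simp
  finally show ?case .
qed

lemma eF_sign:
  fixes p q :: real
  assumes "1/2 < p" "p < 1" "0 \<le> q" "q \<le> 1" "p \<le> q \<or> q \<le> 1 - p"
  shows "1 - 2*q \<noteq> 0 \<and> 0 \<le> (1 - 2*q) * (q * rr p True t * (-1) + (1 - q) * rr p False t)"
proof (cases t)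
  case True
  then have F: "q * rr p True t * (-1) + (1 - q) * rr p False t = 1 - p - q" by (simp add: rr_def algebra_simps)
  show ?thesis unfolding F
  proof (cases "p \<le> q")
    case True then show "1 - 2*q \<noteq> 0 \<and> 0 \<le> (1 - 2*q) * (1 - p - q)" using assms by (auto intro!: mult_nonpos_nonpos)
  next
    case False then show "1 - 2*q \<noteq> 0 \<and> 0 \<le> (1 - 2*q) * (1 - p - q)" using assms by (auto intro!: mult_nonneg_nonneg)
  qed
next
  case False
  then have F: "q * rr p True t * (-1) + (1 - q) * rr p False t = p - q" by (simp add: rr_def algebra_simps)
  show ?thesis unfolding F
  proof (cases "p \<le> q")
    case True then show "1 - 2*q \<noteq> 0 \<and> 0 \<le> (1 - 2*q) * (p - q)" using assms by (auto intro!: mult_nonpos_nonpos)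
  next
    case False then show "1 - 2*q \<noteq> 0 \<and> 0 \<le> (1 - 2*q) * (p - q)" using assms by (auto intro!: mult_nonneg_nonneg)
  qed
qed

lemma guar_row:
  assumes p: "1/2 < p" "p < 1" and q: "\<forall>i<k. 0 \<le> q i \<and> q i \<le> 1"
    and qJ: "\<forall>j\<in>J. p \<le> q j \<or> q j \<le> 1 - p"
    and L: "\<forall>\<tau>\<in>dom_k k. 0 \<le> (\<Sum>D\<in>dom_k k. x D * Wm p D \<tau>)"
  shows "(0 \<le> (\<Sum>D\<in>dom_k k. pri q D * (-1)^(parity J D)) \<longrightarrow> 0 \<le> (\<Sum>D\<in>dom_k k. pri q D * x D * (-1)^(parity J D)))
       \<and> ((\<Sum>D\<in>dom_k k. pri q D * (-1)^(parity J D)) \<le> 0 \<longrightarrow> (\<Sum>D\<in>dom_k k. pri q D * x D * (-1)^(parity J D)) \<le> 0)"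
proof -
  define c where "c = (2*p-1)^k"
  have c: "0 < c" unfolding c_def using p by simp
  define L where "L \<tau> = (\<Sum>D\<in>dom_k k. x D * Wm p D \<tau>)" for \<tau>
  define e where "e i = q i * (if i \<in> J then -1 else 1) + (1 - q i)" for i
  define F where "F \<tau> i = q i * rr p True (\<tau>!i) * (if i \<in> J then -1 else 1) + (1 - q i) * rr p False (\<tau>!i)" for \<tau> i
  have prior: "(\<Sum>D\<in>dom_k k. pri q D * (-1)^(parity J D)) = (\<Prod>i<k. e i)"
    using sum_pri_chi[of q "\<lambda>i a. 1" k J] by (simp add: e_def)
  have post1: "(\<Sum>D\<in>dom_k k. pri q D * Rm p D \<tau> * (-1)^(parity J D)) = (\<Prod>i<k. F \<tau> i)" for \<tau>
  proof -
    have "(\<Sum>D\<in>dom_k k. pri q D * Rm p D \<tau> * (-1)^(parity J D)) =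
        (\<Sum>D\<in>dom_k k. pri q D * (\<Prod>i<k. rr p (D!i) (\<tau>!i)) * (-1)^(parity J D))"
      by (rule sum.cong) (auto simp: Rm_def dom_k_def)
    also have "\<dots> = (\<Prod>i<k. F \<tau> i)" by (subst sum_pri_chi) (simp add: F_def)
    finally show ?thesis .
  qed
  have ef: "\<forall>i<k. e i \<noteq> 0 \<and> 0 \<le> e i * F \<tau> i" for \<tau>
  proof (intro allI impI)
    fix i assume i: "i < k"
    show "e i \<noteq> 0 \<and> 0 \<le> e i * F \<tau> i"
    proof (cases "i \<in> J")
      case True
      have "e i = 1 - 2 * q i" using True by (simp add: e_def)
      moreover have "F \<tau> i = q i * rr p True (\<tau>!i) * (-1) + (1 - q i) * rr p False (\<tau>!i)"
        using True by (simp add: F_def)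
      ultimately show ?thesis using eF_sign[of p "q i" "\<tau>!i"] p q i qJ True by auto
    next
      case False
      then show ?thesis using q i p by (auto simp: e_def F_def rr_def intro!: add_nonneg_nonneg mult_nonneg_nonneg)
    qed
  qed
  have xD: "x D = (\<Sum>\<tau>\<in>dom_k k. L \<tau> * Rm p D \<tau>) / c" if "D \<in> dom_k k" for D
    using inversion[OF that, of x p] c p unfolding L_def c_def by (simp add: field_simps)
  have post: "(\<Sum>D\<in>dom_k k. pri q D * x D * (-1)^(parity J D)) = (\<Sum>\<tau>\<in>dom_k k. L \<tau> * (\<Prod>i<k. F \<tau> i)) / c"
  proof -
    have "(\<Sum>D\<in>dom_k k. pri q D * x D * (-1)^(parity J D))
        = (\<Sum>D\<in>dom_k k. \<Sum>\<tau>\<in>dom_k k. L \<tau> * (pri q D * Rm p D \<tau> * (-1)^(parity J D)) / c)"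
      by (rule sum.cong[OF refl]) (simp add: xD sum_distrib_left sum_distrib_right sum_divide_distrib algebra_simps)
    also have "\<dots> = (\<Sum>\<tau>\<in>dom_k k. L \<tau> * (\<Sum>D\<in>dom_k k. pri q D * Rm p D \<tau> * (-1)^(parity J D)) / c)"
      by (subst sum.swap) (simp add: sum_distrib_left sum_divide_distrib)
    also have "\<dots> = (\<Sum>\<tau>\<in>dom_k k. L \<tau> * (\<Prod>i<k. F \<tau> i)) / c"
      by (simp add: post1 sum_divide_distrib)
    finally show ?thesis .
  qed
  have Lnn: "\<tau> \<in> dom_k k \<Longrightarrow> 0 \<le> L \<tau>" for \<tau> using L by (simp add: L_def)
  show ?thesis unfolding prior post
  proof (intro conjI impI)
    assume "0 \<le> (\<Prod>i<k. e i)"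
    then have "\<And>\<tau>. 0 \<le> (\<Prod>i<k. F \<tau> i)" using sign_prod[OF ef] by blast
    then show "0 \<le> (\<Sum>\<tau>\<in>dom_k k. L \<tau> * (\<Prod>i<k. F \<tau> i)) / c"
      using c Lnn by (intro divide_nonneg_pos sum_nonneg mult_nonneg_nonneg) auto
  next
    assume "(\<Prod>i<k. e i) \<le> 0"
    then have "\<And>\<tau>. (\<Prod>i<k. F \<tau> i) \<le> 0" using sign_prod[OF ef] by blast
    then show "(\<Sum>\<tau>\<in>dom_k k. L \<tau> * (\<Prod>i<k. F \<tau> i)) / c \<le> 0"
      using c Lnn by (intro divide_nonpos_pos sum_nonpos mult_nonneg_nonpos) auto
  qed
qed

lemma prior_diff:
  assumes "\<forall>i<k. 0 \<le> q i \<and> q i \<le> 1"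
  shows "prior_par q k J 0 - prior_par q k J 1 = (\<Sum>D\<in>dom_k k. pri q D * (-1)^(parity J D))"
  unfolding prior_par_eq[OF assms] by (rule diff_sum[OF finite_dom_k])

lemma post_diff:
  assumes "\<forall>i<k. 0 \<le> q i \<and> q i \<le> 1" "\<omega> \<in> set_pmf (map_pmf snd (joint q k M))"
  shows "post_par q k M J 0 \<omega> - post_par q k M J 1 \<omega> =
     (\<Sum>D\<in>dom_k k. pri q D * pmf (M D) \<omega> * (-1)^(parity J D)) / measure_pmf.prob (joint q k M) {z. snd z = \<omega>}"
  unfolding post_par_eq[OF assms] diff_divide_distrib[symmetric] diff_sum[OF finite_dom_k] ..

lemma dir_if:
  assumes p: "1/2 < p" "p < 1"
    and LHS: "\<forall>\<omega> \<in> (\<Union>D\<in>dom_k k. set_pmf (M D)). (\<lambda>D. pmf (M D) \<omega>) \<in> row_cone p k"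
  shows "parity_guarantee p k M"
  unfolding parity_guarantee_def
proof (intro allI impI ballI)
  fix q :: "nat \<Rightarrow> real" and J \<omega>
  assume q: "\<forall>i<k. 0 \<le> q i \<and> q i \<le> 1" and J: "J \<subseteq> {..<k}"
    and qJ: "\<forall>j\<in>J. p \<le> q j \<or> q j \<le> 1 - p"
    and w: "\<omega> \<in> set_pmf (map_pmf snd (joint q k M))"
  obtain D0 where D0: "D0 \<in> set_pmf (ibits q k)" "\<omega> \<in> set_pmf (M D0)"
    using w by (auto simp: set_joint)
  then have "D0 \<in> dom_k k" using set_ibits[OF q] by auto
  then have "(\<lambda>D. pmf (M D) \<omega>) \<in> row_cone p k" using LHS D0 by blast
  then obtain c M' \<omega>' where c: "0 \<le> c" "M' \<in> cnf p"
     and eq: "\<forall>D\<in>dom_k k. pmf (M D) \<omega> = c * pmf (M' D) \<omega>'"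
    unfolding row_cone_def by auto
  have L: "\<forall>\<tau>\<in>dom_k k. 0 \<le> (\<Sum>D\<in>dom_k k. pmf (M D) \<omega> * Wm p D \<tau>)"
  proof
    fix \<tau> assume \<tau>: "\<tau> \<in> dom_k k"
    have "(\<Sum>D\<in>dom_k k. pmf (M D) \<omega> * Wm p D \<tau>) = c * (\<Sum>D\<in>dom_k k. pmf (M' D) \<omega>' * Wm p D \<tau>)"
      using eq by (simp add: sum_distrib_left algebra_simps)
    also have "0 \<le> \<dots>" using c cnf_inv[OF c(2) p \<tau>] by simp
    finally show "0 \<le> (\<Sum>D\<in>dom_k k. pmf (M D) \<omega> * Wm p D \<tau>)" .
  qed
  note G = guar_row[OF p q qJ L]
  have d: "0 \<le> measure_pmf.prob (joint q k M) {z. snd z = \<omega>}" by simp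
  show "(prior_par q k J 1 \<le> prior_par q k J 0 \<longrightarrow> post_par q k M J 1 \<omega> \<le> post_par q k M J 0 \<omega>) \<and>
        (prior_par q k J 0 \<le> prior_par q k J 1 \<longrightarrow> post_par q k M J 0 \<omega> \<le> post_par q k M J 1 \<omega>)"
  proof (intro conjI impI)
    assume "prior_par q k J 1 \<le> prior_par q k J 0"
    then have "0 \<le> prior_par q k J 0 - prior_par q k J 1" by simp
    then have "0 \<le> post_par q k M J 0 \<omega> - post_par q k M J 1 \<omega>"
      unfolding prior_diff[OF q] post_diff[OF q w] using G d by (simp add: divide_nonneg_nonneg)
    then show "post_par q k M J 1 \<omega> \<le> post_par q k M J 0 \<omega>" by simp
  next
    assume "prior_par q k J 0 \<le> prior_par q k J 1"
    then have "prior_par q k J 0 - prior_par q k J 1 \<le> 0" by simp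
    then have "post_par q k M J 0 \<omega> - post_par q k M J 1 \<omega> \<le> 0"
      unfolding prior_diff[OF q] post_diff[OF q w] using G d by (simp add: divide_nonpos_nonneg)
    then show "post_par q k M J 0 \<omega> \<le> post_par q k M J 1 \<omega>" by simp
  qed
qed

lemma L_of_guarantee:
  assumes p: "1/2 < p" "p < 1" and G: "parity_guarantee p k M"
    and D0: "D0 \<in> dom_k k" "\<omega> \<in> set_pmf (M D0)" and \<tau>: "\<tau> \<in> dom_k k"
  shows "0 \<le> (\<Sum>D\<in>dom_k k. pmf (M D) \<omega> * Wm p D \<tau>)"
proof -
  define q where "q i = (if \<tau>!i then p else 1 - p)" for i
  define J where "J = {..<(k::nat)}"
  define s where "s = (\<Prod>i<k. if \<tau>!i then -1 else (1::real))"
  have q: "\<forall>i<k. 0 \<le> q i \<and> q i \<le> 1" using p by (auto simp: q_def)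
  have qJ: "\<forall>j\<in>J. p \<le> q j \<or> q j \<le> 1 - p" by (auto simp: q_def)
  have lD0: "length D0 = k" using D0 by (simp add: dom_k_def)
  have "0 < pri q D0" unfolding pri_def using p by (intro prod_pos) (auto simp: q_def)
  then have "D0 \<in> set_pmf (ibits q k)" by (simp add: set_pmf_iff pmf_ibits[OF q] lD0)
  then have jz: "(D0, \<omega>) \<in> set_pmf (joint q k M)" using D0 by (simp add: set_joint)
  then have w: "\<omega> \<in> set_pmf (map_pmf snd (joint q k M))" by force
  have d: "0 < measure_pmf.prob (joint q k M) {z. snd z = \<omega>}"
    by (rule measure_pmf_posI[OF jz]) simp
  have G': "(prior_par q k J 1 \<le> prior_par q k J 0 \<longrightarrow> post_par q k M J 1 \<omega> \<le> post_par q k M J 0 \<omega>) \<and>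
        (prior_par q k J 0 \<le> prior_par q k J 1 \<longrightarrow> post_par q k M J 0 \<omega> \<le> post_par q k M J 1 \<omega>)"
    using G q qJ w unfolding parity_guarantee_def J_def by blast
  define P where "P = (\<Sum>D\<in>dom_k k. pri q D * (-1)^(parity J D))"
  define S where "S = (\<Sum>D\<in>dom_k k. pri q D * pmf (M D) \<omega> * (-1)^(parity J D))"
  have PD: "prior_par q k J 0 - prior_par q k J 1 = P" unfolding P_def by (rule prior_diff[OF q])
  have SD: "post_par q k M J 0 \<omega> - post_par q k M J 1 \<omega> = S / measure_pmf.prob (joint q k M) {z. snd z = \<omega>}"
    unfolding S_def by (rule post_diff[OF q w])
  have PS: "0 \<le> P * S"
  proof (cases "0 \<le> P")
    case True
    then have "0 \<le> S / measure_pmf.prob (joint q k M) {z. snd z = \<omega>}" using G' PD SD by linarith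
    then have "0 \<le> S" using d by (simp add: zero_le_divide_iff)
    then show ?thesis using True by simp
  next
    case False
    then have "S / measure_pmf.prob (joint q k M) {z. snd z = \<omega>} \<le> 0" using G' PD SD by linarith
    then have "S \<le> 0" using d by (simp add: divide_le_0_iff)
    then show ?thesis using False by (simp add: mult_nonpos_nonpos)
  qed
  have pw: "pri q D * (-1)^(parity J D) = s * Wm p D \<tau>" if "D \<in> dom_k k" for D
  proof -
    have l: "length D = k" using that by (simp add: dom_k_def)
    have "pri q D * (-1)^(parity J D) = (\<Prod>i<k. (if D!i then q i else 1 - q i) * (if D!i then -1 else 1))"
      unfolding chi_prod[OF l] pri_def l J_def by (simp add: prod.distrib)
    also have "\<dots> = (\<Prod>i<k. (if \<tau>!i then -1 else 1) * ww p (D!i) (\<tau>!i))"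
      by (rule prod.cong) (auto simp: q_def ww_def)
    also have "\<dots> = s * Wm p D \<tau>" unfolding s_def Wm_def l by (simp add: prod.distrib)
    finally show ?thesis .
  qed
  have P: "P = s * (2*p-1)^k"
  proof -
    have "P = (\<Prod>i<k. q i * 1 * (if i \<in> J then -1 else 1) + (1 - q i) * 1)"
      unfolding P_def using sum_pri_chi[of q "\<lambda>i a. 1" k J] by simp
    also have "\<dots> = (\<Prod>i<k. (if \<tau>!i then -1 else 1) * (2*p-1))"
      by (rule prod.cong) (auto simp: J_def q_def algebra_simps)
    also have "\<dots> = s * (2*p-1)^k" unfolding s_def by (simp add: prod.distrib)
    finally show ?thesis .
  qed
  have S: "S = s * (\<Sum>D\<in>dom_k k. pmf (M D) \<omega> * Wm p D \<tau>)"
    unfolding S_def sum_distrib_left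
  proof (rule sum.cong[OF refl])
    fix D assume D: "D \<in> dom_k k"
    have "pri q D * pmf (M D) \<omega> * (-1)^(parity J D) = pmf (M D) \<omega> * (pri q D * (-1)^(parity J D))"
      by (simp add: ac_simps)
    also have "\<dots> = pmf (M D) \<omega> * (s * Wm p D \<tau>)" by (simp only: pw[OF D])
    finally show "pri q D * pmf (M D) \<omega> * (-1)^(parity J D) = s * (pmf (M D) \<omega> * Wm p D \<tau>)"
      by (simp add: ac_simps)
  qed
  have ss: "s * s = 1" unfolding s_def prod.distrib[symmetric] by (rule prod.neutral) auto
  have "P * S = (s * s) * (2*p-1)^k * (\<Sum>D\<in>dom_k k. pmf (M D) \<omega> * Wm p D \<tau>)"
    unfolding P S by (simp add: algebra_simps)
  then have "0 \<le> (2*p-1)^k * (\<Sum>D\<in>dom_k k. pmf (M D) \<omega> * Wm p D \<tau>)" using PS ss by simp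
  moreover have "0 < (2*p-1)^k" using p by simp
  ultimately show ?thesis by (simp add: zero_le_mult_iff)
qed

lemma dir_only_if:
  assumes p: "1/2 < p" "p < 1" and G: "parity_guarantee p k M"
    and D0: "D0 \<in> dom_k k" "\<omega> \<in> set_pmf (M D0)"
  shows "(\<lambda>D. pmf (M D) \<omega>) \<in> row_cone p k"
proof -
  have p01: "0 \<le> p" "p \<le> 1" using p by auto
  define L where "L \<tau> = (\<Sum>D\<in>dom_k k. pmf (M D) \<omega> * Wm p D \<tau>)" for \<tau>
  have Lnn: "\<tau> \<in> dom_k k \<Longrightarrow> 0 \<le> L \<tau>" for \<tau>
    unfolding L_def by (rule L_of_guarantee[OF p G D0])
  define Y where "Y = (\<Sum>\<tau>\<in>dom_k k. L \<tau>)"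
  have c: "0 < (2*p-1)^k" using p by simp
  have inv: "(\<Sum>\<tau>\<in>dom_k k. L \<tau> * Rm p D \<tau>) = (2*p-1)^k * pmf (M D) \<omega>" if "D \<in> dom_k k" for D
    unfolding L_def by (rule inversion[OF that])
  have Y: "0 < Y"
  proof (rule ccontr)
    assume "\<not> 0 < Y"
    then have "Y = 0" using Lnn by (simp add: Y_def sum_nonneg order.antisym)
    then have "\<forall>\<tau>\<in>dom_k k. L \<tau> = 0" using Lnn unfolding Y_def
      by (subst (asm) sum_nonneg_eq_0_iff[OF finite_dom_k]) auto
    then have "(2*p-1)^k * pmf (M D0) \<omega> = 0" using inv[OF D0(1)] by simp
    then show False using c p D0(2) by (simp add: set_pmf_iff)
  qed
  define yy where "yy \<tau> = (if \<tau> \<in> dom_k k then L \<tau> / Y else 0)" for \<tau>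
  have yy: "0 \<le> yy \<tau> \<and> yy \<tau> \<le> 1" for \<tau>
  proof (cases "\<tau> \<in> dom_k k")
    case True
    have "L \<tau> \<le> Y" unfolding Y_def using True Lnn by (intro member_le_sum finite_dom_k) auto
    then show ?thesis using True Lnn[OF True] Y by (simp add: yy_def)
  qed (simp add: yy_def)
  define g where "g = (\<lambda>b::bool. if b then (0::nat) else 1)"
  define M' where "M' D = bind_pmf (map_pmf to_nat (RR p D)) (\<lambda>n. map_pmf g (bernoulli_pmf (yy (from_nat n))))" for D
  have M': "M' \<in> cnf p"
  proof -
    have "(\<lambda>D. map_pmf to_nat (RR p D)) \<in> cnf p" by (rule cnf.base) simp
    then show ?thesis unfolding M'_def[abs_def] by (rule cnf.post)
  qed
  have pg: "pmf (map_pmf g (bernoulli_pmf r)) 0 = r" if "0 \<le> r" "r \<le> 1" for r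
  proof -
    have "g -` {0} = {True}" by (auto simp: g_def split: if_splits)
    then show ?thesis using that by (simp add: pmf_map measure_pmf_single)
  qed
  have pM': "pmf (M' D) 0 = (2*p-1)^k * pmf (M D) \<omega> / Y" if D: "D \<in> dom_k k" for D
  proof -
    have "pmf (M' D) 0 = (\<integral>\<tau>. yy \<tau> \<partial>RR p D)"
      unfolding M'_def bind_map_pmf pmf_bind using yy by (simp add: pg)
    also have "\<dots> = (\<Sum>\<tau>\<in>dom_k k. yy \<tau> * pmf (RR p D) \<tau>)"
      by (rule integral_measure_pmf_real) (auto simp: finite_dom_k yy_def split: if_splits)
    also have "\<dots> = (\<Sum>\<tau>\<in>dom_k k. L \<tau> * Rm p D \<tau>) / Y"
      unfolding sum_divide_distrib using D by (intro sum.cong) (auto simp: yy_def pmf_RR[OF p01] dom_k_def)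
    also have "\<dots> = (2*p-1)^k * pmf (M D) \<omega> / Y" by (simp add: inv[OF D])
    finally show ?thesis .
  qed
  have "0 \<in> set_pmf (M' D0)"
    using pM'[OF D0(1)] c p Y D0(2) by (simp add: set_pmf_iff)
  moreover have "\<forall>D\<in>dom_k k. pmf (M D) \<omega> = (Y / (2*p-1)^k) * pmf (M' D) 0"
    using pM' c p Y by simp
  moreover have "0 \<le> Y / (2*p-1)^k" using c Y by simp
  ultimately show ?thesis unfolding row_cone_def using M' D0(1) by blast
qed

theorem theorem5:
  fixes p :: real and k :: nat and M :: "bool list \<Rightarrow> 'b pmf"
  assumes "1/2 < p" and "p < 1"
  shows "(\<forall>\<omega> \<in> (\<Union>D\<in>dom_k k. set_pmf (M D)). (\<lambda>D. pmf (M D) \<omega>) \<in> row_cone p k)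
         \<longleftrightarrow> parity_guarantee p k M"
proof
  assume "\<forall>\<omega> \<in> (\<Union>D\<in>dom_k k. set_pmf (M D)). (\<lambda>D. pmf (M D) \<omega>) \<in> row_cone p k"
  then show "parity_guarantee p k M" by (rule dir_if[OF assms])
next
  assume G: "parity_guarantee p k M"
  show "\<forall>\<omega> \<in> (\<Union>D\<in>dom_k k. set_pmf (M D)). (\<lambda>D. pmf (M D) \<omega>) \<in> row_cone p k"
    using dir_only_if[OF assms G] by blast
qed

end
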